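(* For every $b\in\mathbb F_{3^{2m}}$, the vector $(\mathrm{Tr}_{2m}(bt))_{t\in\mathbb F_{3^{2m}}}$ belongs to $\mathcal C_3(\mathbb D_d)$.
   Context: Let $m\ge 2$ be an integer. For $s\in\{m,2m\}$ let $\mathrm{Tr}_s:\mathbb F_{3^s}\to\mathbb F_3$ denote the absolute trace. Vectors in $\mathbb F_3^{3^{2m}}$ are indexed by $\mathbb F_{3^{2m}}$, and a function $f:\mathbb F_{3^{2m}}\to\mathbb F_3$ is identified with $(f(t))_{t\in\mathbb F_{3^{2m}}}$. Let $\mathcal C(2m,3)=\{(\mathrm{Tr}_{2m}(at^{3^m+1}+bt)+h)_{t\in\mathbb F_{3^{2m}}}: a\in\mathbb F_{3^m}, b\in\mathbb F_{3^{2m}}, h\in\mathbb F_3\}$, let $d$ be its minimum nonzero Hamming weight, let $\mathbb D_d$ be the incidence structure on $\mathbb F_{3^{2m}}$ whose blocks are the supports of the weight-$d$ codewords, and let $\mathcal C_3(\mathbb D_d)$ be the $\mathbb F_3$-span of the incidence vectors of the blocks (entry $1$ on the block, $0$ elsewhere). *)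

theory Defs
  imports Main
begin

text \<open>The field F_{3^{2m}} is modelled as a finite field type 'a with CARD('a) = 3^(2m).
  Vectors in F_3^{3^{2m}} indexed by F_{3^{2m}} are functions 'a => 'a with values in F_3.\<close>

definition F3 :: "'a::field set" where
  "F3 = {0, 1, 2}"

definition subfield_m :: "nat \<Rightarrow> 'a::field set" where
  "subfield_m m = {x. x ^ (3 ^ m) = x}"

definition Tr :: "nat \<Rightarrow> 'a::field \<Rightarrow> 'a" where
  "Tr s x = (\<Sum>i<s. x ^ (3 ^ i))"

definition code_C :: "nat \<Rightarrow> ('a::{field,finite} \<Rightarrow> 'a) set" where
  "code_C m = {(\<lambda>t. Tr (2*m) (a * t ^ (3 ^ m + 1) + b * t) + h) | a b h.
                 a \<in> subfield_m m \<and> h \<in> F3}"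

definition hweight :: "('a::finite \<Rightarrow> 'b::zero) \<Rightarrow> nat" where
  "hweight c = card {t. c t \<noteq> 0}"

definition min_weight :: "('a::finite \<Rightarrow> 'b::zero) set \<Rightarrow> nat" where
  "min_weight C = Min {hweight c | c. c \<in> C \<and> c \<noteq> (\<lambda>_. 0)}"

definition supp :: "('a \<Rightarrow> 'b::zero) \<Rightarrow> 'a set" where
  "supp c = {t. c t \<noteq> 0}"

definition blocks_D :: "('a::finite \<Rightarrow> 'b::zero) set \<Rightarrow> nat \<Rightarrow> 'a set set" where
  "blocks_D C d = {supp c | c. c \<in> C \<and> hweight c = d}"

definition incidence_vec :: "'a set \<Rightarrow> 'a \<Rightarrow> 'b::{zero,one}" where
  "incidence_vec B = (\<lambda>t. if t \<in> B then 1 else 0)"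

text \<open>F_3-span of the incidence vectors of the blocks (all blocks are subsets of the finite
  type, so there are finitely many of them).\<close>
definition code_of_design :: "'a::finite set set \<Rightarrow> ('a \<Rightarrow> 'b::field) set" where
  "code_of_design Bs = {(\<lambda>t. \<Sum>B\<in>Bs. coef B * incidence_vec B t) | coef.
                          \<forall>B\<in>Bs. coef B \<in> F3}"

end

theory Submission imports Defs "HOL-Computational_Algebra.Polynomial" begin


lemma ident6:
  fixes q0 p1 p2 k1 k2 r h :: "'b::comm_ring_1"
  shows "2*(q0 + 2*p2 + k2 + h)^2 + (q0 + 2*(-p2) + k2 + h)^2
    + 2*(q0 + 2*(p1+p2) + (k2 + 2*r + k1) + h)^2 + (q0 + 2*(-(p1+p2)) + (k2 + 2*r + k1) + h)^2
    + (q0 + 2*(p1-p2) + (k2 + 2*(-r) + k1) + h)^2 + 2*(q0 + 2*(p2-p1) + (k2 + 2*(-r) + k1) + h)^2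
    = r*p1 + 2*k1*p2 + 3*((3)*q0*q0 + (4)*q0*p2 + (6)*q0*k2 + (6)*q0*h + (12)*p2*p2 + (4)*p2*k2 + (4)*p2*h + (3)*k2*k2 + (6)*k2*h + (3)*h*h + (4)*q0*k1 + (8)*p1*p1 + (5)*p1*r + (2)*p2*k1 + (4)*k1*k2 + (8)*r*r + (2)*k1*k1 + (4)*k1*h)"
  by (simp add: power2_eq_square algebra_simps)

context
  fixes m :: nat
  assumes m2: "m \<ge> 2" and cardU: "card (UNIV :: 'a::{field,finite} set) = 3 ^ (2 * m)"
begin

lemma char3: "(3::'a) = 0"
proof -
  have "(\<Sum>y\<in>(UNIV::'a set). y + 1) = (\<Sum>y\<in>UNIV. y)"
    by (rule sum.reindex_bij_witness[of _ "\<lambda>y. y - 1" "\<lambda>y. y + 1"]) auto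
  hence "of_nat (card (UNIV::'a set)) = (0::'a)"
    by (simp add: sum.distrib)
  hence "(3::'a) ^ (2*m) = 0" using cardU by simp
  thus ?thesis by simp
qed

lemma pow_card: "(x::'a) ^ (3 ^ (2*m)) = x"
proof (cases "x = 0")
  case False
  have "x * (\<Prod>y\<in>UNIV-{0}. x * y) = x * x ^ (card (UNIV :: 'a set) - 1) * \<Prod>(UNIV-{0::'a})"
    by (simp add: prod.distrib mult_ac)
  also have "x * x ^ (card (UNIV :: 'a set) - 1) = x ^ Suc (card (UNIV :: 'a set) - 1)"
    by (subst power_Suc) auto
  also have "Suc (card (UNIV :: 'a set) - 1) = card (UNIV :: 'a set)"
    using finite_UNIV_card_ge_0[where ?'a = 'a] by simp
  also have "(\<Prod>y\<in>UNIV-{0}. x * y) = (\<Prod>y\<in>UNIV-{0::'a}. y)"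
    by (rule prod.reindex_bij_witness[of _ "\<lambda>y. y / x" "\<lambda>y. x * y"]) (use False in auto)
  finally show ?thesis using cardU
    by simp
qed (use m2 in auto)

lemma frob3: "((x::'a) + y) ^ 3 = x ^ 3 + y ^ 3"
proof -
  have "(x + y) ^ 3 = x^3 + y^3 + 3 * (x*x*y + x*y*y)"
    by (simp add: power3_eq_cube algebra_simps)
  thus ?thesis by (simp add: char3)
qed

lemma frob: "((x::'a) + y) ^ (3^i) = x ^ (3^i) + y ^ (3^i)"
proof (induction i)
  case (Suc i)
  have "(x + y) ^ (3^Suc i) = ((x+y)^(3^i))^3" by (simp add: power_mult[symmetric] mult.commute)
  also have "\<dots> = (x ^ (3^i))^3 + (y ^ (3^i))^3" using Suc frob3 by simp
  finally show ?case by (simp add: power_mult[symmetric] mult.commute)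
qed simp

lemma frob_neg: "(-(x::'a)) ^ (3^i) = - (x ^ (3^i))"
  by (simp add: power_minus_odd)

lemma frob_diff: "((x::'a) - y) ^ (3^i) = x ^ (3^i) - y ^ (3^i)"
  using frob[of x "-y" i] frob_neg[of y i] by simp

lemma F3_iff: "(y::'a) \<in> F3 \<longleftrightarrow> y ^ 3 = y"
proof
  assume "y \<in> F3"
  moreover have "(2::'a)^3 = 2 + 2 * 3" by simp
  ultimately show "y^3 = y" by (auto simp: F3_def char3)
next
  assume h: "y ^ 3 = y"
  have "y * (y - 1) * (y - 2) = y^3 - y - 3 * (y*y - y)"
    by (simp add: power3_eq_cube algebra_simps)
  also have "\<dots> = 0" using h by (simp add: char3)
  finally show "y \<in> F3" by (auto simp: F3_def)
qed

lemma F3_add: "(x::'a) \<in> F3 \<Longrightarrow> y \<in> F3 \<Longrightarrow> x + y \<in> F3"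
  by (simp add: F3_iff frob3)

lemma F3_mult: "(x::'a) \<in> F3 \<Longrightarrow> y \<in> F3 \<Longrightarrow> x * y \<in> F3"
  by (simp add: F3_iff power_mult_distrib)

lemma F3_neg: "(x::'a) \<in> F3 \<Longrightarrow> - x \<in> F3"
  by (simp add: F3_iff)

lemma F3_pow: "(r::'a) \<in> F3 \<Longrightarrow> r ^ (3^i) = r"
proof (induction i)
  case (Suc i)
  have "r ^ (3^Suc i) = (r ^ (3^i))^3" by (simp add: power_mult[symmetric] mult.commute)
  thus ?case using Suc by (simp add: F3_iff)
qed simp

lemma Tr_add: "Tr n ((x::'a) + y) = Tr n x + Tr n y"
  by (simp add: Tr_def frob sum.distrib)

lemma Tr_neg: "Tr n (-(x::'a)) = - Tr n x"
  by (simp add: Tr_def frob_neg sum_negf)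

lemma Tr_diff: "Tr n ((x::'a) - y) = Tr n x - Tr n y"
  by (simp add: Tr_def frob_diff sum_subtractf)

lemma Tr_smult: "(r::'a) \<in> F3 \<Longrightarrow> Tr n (r * x) = r * Tr n x"
  by (simp add: Tr_def power_mult_distrib F3_pow sum_distrib_left)

lemma Tr_zero: "Tr n (0::'a) = 0"
  by (auto simp: Tr_def intro!: sum.neutral)

lemma Tr_pow3: "Tr (2*m) ((x::'a) ^ 3) = Tr (2*m) x"
proof -
  define f where "f i = x ^ (3^i)" for i
  have fN: "f (2*m) = f 0" using pow_card by (simp add: f_def)
  have "Tr (2*m) (x^3) = (\<Sum>i<2*m. f (Suc i))"
    by (simp add: Tr_def f_def power_mult[symmetric] mult.commute)
  also have "\<dots> = (\<Sum>i<Suc (2*m). f i) - f 0"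
    by (subst sum.lessThan_Suc_shift) simp
  also have "\<dots> = (\<Sum>i<2*m. f i)" using fN by (simp add: sum.lessThan_Suc)
  finally show ?thesis by (simp add: Tr_def f_def)
qed

lemma Tr_pow: "Tr (2*m) ((x::'a) ^ (3^j)) = Tr (2*m) x"
proof (induction j)
  case (Suc j)
  have "x ^ (3^Suc j) = (x ^ (3^j))^3" by (simp add: power_mult[symmetric] mult.commute)
  thus ?case using Suc Tr_pow3 by simp
qed simp

lemma sum_cube: "finite A \<Longrightarrow> (\<Sum>i\<in>A. (f i::'a)) ^ 3 = (\<Sum>i\<in>A. f i ^ 3)"
  by (induction A rule: finite_induct) (auto simp: frob3)

lemma Tr_F3: "Tr (2*m) (x::'a) \<in> F3"
proof -
  have "(Tr (2*m) x)^3 = Tr (2*m) (x^3)"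
    by (simp add: Tr_def sum_cube power_mult[symmetric] mult.commute)
  thus ?thesis by (simp add: F3_iff Tr_pow3)
qed

lemma Tr_nonzero: "\<exists>y::'a. Tr (2*m) y \<noteq> 0"
proof (rule ccontr)
  assume "\<not> ?thesis"
  hence all0: "\<And>y::'a. Tr (2*m) y = 0" by blast
  define p :: "'a poly" where "p = (\<Sum>i<2*m. monom 1 (3^i))"
  have polyp: "poly p y = Tr (2*m) y" for y
    by (simp add: p_def poly_sum poly_monom Tr_def)
  have "coeff p (3^(2*m-1)) = (\<Sum>i<2*m. if i = 2*m-1 then 1 else 0)"
    unfolding p_def coeff_sum coeff_monom by (intro sum.cong) auto
  also have "\<dots> = 1" using m2 by (subst sum.delta) auto
  finally have "p \<noteq> 0" by auto
  hence "card {x. poly p x = 0} \<le> degree p" by (rule card_poly_roots_bound)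
  also have "degree p \<le> 3^(2*m-1)"
    unfolding p_def
  proof (rule degree_sum_le)
    fix i assume "i \<in> {..<2*m}"
    hence "(3::nat)^i \<le> 3^(2*m-1)" by (intro power_increasing) auto
    thus "degree (monom (1::'a) (3^i)) \<le> 3^(2*m-1)"
      using degree_monom_le[of "1::'a" "3^i"] by linarith
  qed simp
  finally have "card (UNIV::'a set) \<le> 3^(2*m-1)" using polyp all0 by simp
  moreover have "(3::nat)^(2*m-1) < 3^(2*m)" by (rule power_strict_increasing) (use m2 in auto)
  ultimately show False using cardU by linarith
qed

lemma Tr_lin_zero: "(\<And>t::'a. Tr (2*m) (x * t) = 0) \<Longrightarrow> x = 0"
proof (rule ccontr)
  assume h: "\<And>t::'a. Tr (2*m) (x * t) = 0" and "x \<noteq> 0"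
  obtain y :: 'a where "Tr (2*m) y \<noteq> 0" using Tr_nonzero by blast
  moreover have "Tr (2*m) (x * (y / x)) = 0" by (rule h)
  ultimately show False using \<open>x \<noteq> 0\<close> by simp
qed

lemma frob_inj: "(x::'a) ^ (3^j) = y ^ (3^j) \<Longrightarrow> x = y"
  using frob_diff[of x y j] by simp

lemma frob_surj: "\<exists>e::'a. e ^ (3^j) = z"
proof -
  have "inj (\<lambda>e::'a. e ^ (3^j))" by (auto intro: injI frob_inj)
  hence "surj (\<lambda>e::'a. e ^ (3^j))" using finite_UNIV_inj_surj finite_UNIV by blast
  thus ?thesis by (metis surjD)
qed

lemma qq: "((x::'a) ^ (3^m)) ^ (3^m) = x"
proof -
  have "((x::'a) ^ (3^m)) ^ (3^m) = x ^ (3^m * 3^m)" by (simp add: power_mult)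
  also have "(3::nat)^m * 3^m = 3^(2*m)" by (simp add: power_add[symmetric] mult_2)
  finally show ?thesis using pow_card by simp
qed

lemma Tr_swap: "(a::'a) ^ (3^m) = a \<Longrightarrow> Tr (2*m) (a * x * t ^ (3^m)) = Tr (2*m) (a * x ^ (3^m) * t)"
proof -
  assume a: "a ^ (3^m) = a"
  have "Tr (2*m) (a * x ^ (3^m) * t) = Tr (2*m) ((a * x ^ (3^m) * t) ^ (3^m))" by (rule Tr_pow[symmetric])
  also have "(a * x ^ (3^m) * t) ^ (3^m) = a * x * t ^ (3^m)"
    by (simp add: power_mult_distrib a qq)
  finally show ?thesis by simp
qed

lemma Ttrans: "(a::'a) ^ (3^m) = a \<Longrightarrow>
  Tr (2*m) (a * (t + x) ^ (3^m + 1)) = Tr (2*m) (a * t ^ (3^m + 1)) + 2 * Tr (2*m) (a * x ^ (3^m) * t) + Tr (2*m) (a * x ^ (3^m + 1))"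
proof -
  assume a: "a ^ (3^m) = a"
  have "a * (t + x) ^ (3^m + 1) = a * (t^(3^m) + x^(3^m)) * (t + x)" by (simp add: frob)
  also have "\<dots> = a * t ^ (3^m + 1) + a * x ^ (3^m) * t + a * x * t ^ (3^m) + a * x ^ (3^m + 1)"
    by (simp add: algebra_simps)
  finally show ?thesis by (simp add: Tr_add Tr_swap[OF a])
qed

lemma code_val: "c \<in> code_C m \<Longrightarrow> (c::'a \<Rightarrow> 'a) t \<in> F3"
  by (auto simp: code_C_def intro!: F3_add Tr_F3)

lemma inc_sq: "(\<And>t. (c::'a \<Rightarrow> 'a) t \<in> F3) \<Longrightarrow> incidence_vec (supp c) = (\<lambda>t. (c t)^2)"
proof
  fix t assume h: "\<And>t. (c::'a \<Rightarrow> 'a) t \<in> F3"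
  show "incidence_vec (supp c) t = (c t)^2"
  proof (cases "c t = 0")
    case False
    have "c t * (c t ^ 2) = c t * 1" using h[of t] by (simp add: F3_iff power3_eq_cube power2_eq_square)
    thus ?thesis using False by (simp add: incidence_vec_def supp_def)
  qed (simp add: incidence_vec_def supp_def)
qed

lemma V0: "(\<lambda>t. 0::'a) \<in> code_of_design Bs"
  unfolding code_of_design_def by (rule CollectI, rule exI[of _ "\<lambda>_. 0"]) (auto simp: F3_def)

lemma Vadd: "f \<in> code_of_design Bs \<Longrightarrow> g \<in> code_of_design Bs \<Longrightarrow> (\<lambda>t. f t + g t :: 'a) \<in> code_of_design Bs"
proof -
  assume "f \<in> code_of_design Bs" "g \<in> code_of_design Bs"
  then obtain cf cg where f: "f = (\<lambda>t. \<Sum>B\<in>Bs. cf B * incidence_vec B t)" "\<forall>B\<in>Bs. cf B \<in> F3"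
    and g: "g = (\<lambda>t. \<Sum>B\<in>Bs. cg B * incidence_vec B t)" "\<forall>B\<in>Bs. cg B \<in> F3"
    unfolding code_of_design_def by blast
  show ?thesis unfolding code_of_design_def
    by (rule CollectI, rule exI[of _ "\<lambda>B. cf B + cg B"])
       (auto simp: f g sum.distrib algebra_simps intro!: F3_add)
qed

lemma Vsmult: "r \<in> F3 \<Longrightarrow> f \<in> code_of_design Bs \<Longrightarrow> (\<lambda>t. r * f t :: 'a) \<in> code_of_design Bs"
proof -
  assume r: "r \<in> F3" and "f \<in> code_of_design Bs"
  then obtain cf where f: "f = (\<lambda>t. \<Sum>B\<in>Bs. cf B * incidence_vec B t)" "\<forall>B\<in>Bs. cf B \<in> F3"
    unfolding code_of_design_def by blast
  show ?thesis unfolding code_of_design_def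
    by (rule CollectI, rule exI[of _ "\<lambda>B. r * cf B"])
       (auto simp: f r sum_distrib_left algebra_simps intro!: F3_mult)
qed

lemma Vblock: "B0 \<in> Bs \<Longrightarrow> (incidence_vec B0 :: 'b::finite \<Rightarrow> 'a) \<in> code_of_design Bs"
proof -
  assume B0: "B0 \<in> Bs"
  have "(\<Sum>B\<in>Bs. (if B = B0 then 1 else 0) * incidence_vec B t) = (incidence_vec B0 t :: 'a)" for t
  proof -
    have "(\<Sum>B\<in>Bs. (if B = B0 then 1 else 0) * incidence_vec B t) = (\<Sum>B\<in>Bs. if B = B0 then incidence_vec B t else (0::'a))"
      by (intro sum.cong) auto
    also have "\<dots> = incidence_vec B0 t" using B0 by (simp add: sum.delta')
    finally show ?thesis .
  qed
  thus ?thesis unfolding code_of_design_def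
    by (intro CollectI exI[of _ "\<lambda>B. if B = B0 then 1 else 0"]) (auto simp: F3_def)
qed

lemma code_transf:
  assumes c: "c \<in> code_C m" and mu: "(\<mu>::'a) \<noteq> 0"
  shows "(\<lambda>t. c (\<mu> * t + x)) \<in> code_C m"
proof -
  obtain a b h where a: "a \<in> subfield_m m" and h: "h \<in> F3"
    and cdef: "c = (\<lambda>t. Tr (2*m) (a * t ^ (3 ^ m + 1) + b * t) + h)"
    using c unfolding code_C_def by blast
  have aq: "a ^ (3^m) = a" using a by (simp add: subfield_m_def)
  define a' where "a' = a * \<mu> ^ (3^m + 1)"
  define b' where "b' = b * \<mu> + 2 * (a * x ^ (3^m) * \<mu>)"
  define h' where "h' = h + Tr (2*m) (a * x ^ (3^m + 1)) + Tr (2*m) (b * x)"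
  have a': "a' \<in> subfield_m m"
    by (simp add: subfield_m_def a'_def power_mult_distrib aq qq)
  have h': "h' \<in> F3" unfolding h'_def by (intro F3_add h Tr_F3)
  have two: "(2::'a) \<in> F3" by (simp add: F3_def)
  have "c (\<mu> * t + x) = Tr (2*m) (a' * t ^ (3 ^ m + 1) + b' * t) + h'" for t
  proof -
    have "c (\<mu> * t + x) = Tr (2*m) (a * (\<mu> * t + x) ^ (3 ^ m + 1)) + Tr (2*m) (b * (\<mu> * t)) + Tr (2*m) (b * x) + h"
      by (simp add: cdef Tr_add distrib_left)
    also have "\<dots> = Tr (2*m) (a * (\<mu> * t) ^ (3 ^ m + 1)) + 2 * Tr (2*m) (a * x ^ (3^m) * (\<mu> * t)) + Tr (2*m) (a * x ^ (3^m + 1))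
        + Tr (2*m) (b * (\<mu> * t)) + Tr (2*m) (b * x) + h"
      by (simp only: Ttrans[OF aq])
    also have "\<dots> = Tr (2*m) (a' * t ^ (3 ^ m + 1) + b' * t) + h'"
    proof -
      have "b' * t = b * (\<mu> * t) + 2 * (a * x ^ (3^m) * (\<mu> * t))"
        by (simp add: b'_def algebra_simps)
      hence e1: "Tr (2*m) (b' * t) = Tr (2*m) (b * (\<mu> * t)) + 2 * Tr (2*m) (a * x ^ (3^m) * (\<mu> * t))"
        by (simp add: Tr_add Tr_smult[OF two])
      have e2: "a' * t ^ (3 ^ m + 1) = a * (\<mu> * t) ^ (3 ^ m + 1)"
        by (simp add: a'_def power_mult_distrib)
      show ?thesis unfolding Tr_add e1 e2 h'_def by (simp only: add_ac)
    qed
    finally show ?thesis .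
  qed
  hence "(\<lambda>t. c (\<mu> * t + x)) = (\<lambda>t. Tr (2*m) (a' * t ^ (3 ^ m + 1) + b' * t) + h')" by auto
  thus ?thesis unfolding code_C_def using a' h' by blast
qed

lemma hweight_transf:
  assumes mu: "(\<mu>::'a) \<noteq> 0"
  shows "hweight (\<lambda>t. (c::'a \<Rightarrow> 'a) (\<mu> * t + x)) = hweight c"
proof -
  have "{t. c (\<mu> * t + x) \<noteq> 0} = (\<lambda>s. (s - x) / \<mu>) ` {s. c s \<noteq> 0}"
  proof (intro set_eqI iffI)
    fix t assume "t \<in> {t. c (\<mu> * t + x) \<noteq> 0}"
    thus "t \<in> (\<lambda>s. (s - x) / \<mu>) ` {s. c s \<noteq> 0}"
      by (intro image_eqI[of _ _ "\<mu> * t + x"]) (use mu in auto)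
  qed (use mu in auto)
  moreover have "inj_on (\<lambda>s. (s - x) / \<mu>) {s. c s \<noteq> 0}"
    by (rule inj_onI) (use mu in auto)
  ultimately show ?thesis unfolding hweight_def by (simp add: card_image)
qed

lemma Pneg: "Tr (2*m) ((a::'a) * (-x) ^ (3^m) * s) = - Tr (2*m) (a * x ^ (3^m) * s)"
  by (simp add: frob_neg Tr_neg[symmetric])

lemma Padd: "Tr (2*m) ((a::'a) * (x + y) ^ (3^m) * s) = Tr (2*m) (a * x ^ (3^m) * s) + Tr (2*m) (a * y ^ (3^m) * s)"
  by (simp add: frob Tr_add[symmetric] algebra_simps)

lemma Pdiff: "Tr (2*m) ((a::'a) * (x - y) ^ (3^m) * s) = Tr (2*m) (a * x ^ (3^m) * s) - Tr (2*m) (a * y ^ (3^m) * s)"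
  by (simp add: frob_diff Tr_diff[symmetric] algebra_simps)

lemma Qneg: "Tr (2*m) ((a::'a) * (-x) ^ (3^m + 1)) = Tr (2*m) (a * x ^ (3^m + 1))"
proof -
  have "(-x) ^ (3^m + 1) = (-x)^(3^m) * (-x)" by simp
  also have "\<dots> = x ^ (3^m + 1)" by (simp add: frob_neg)
  finally show ?thesis by simp
qed

lemma F3_sq: "(w::'a) \<in> F3 \<Longrightarrow> w \<noteq> 0 \<Longrightarrow> w * w = 1"
proof -
  assume "w \<in> F3" "w \<noteq> 0"
  hence "w * (w * w) = w * 1" by (simp add: F3_iff power3_eq_cube)
  thus ?thesis using \<open>w \<noteq> 0\<close> by simp
qed

lemma caseA:
  fixes b0 h :: 'a
  assumes b0: "b0 \<noteq> 0" and h: "h \<in> F3"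
    and MV: "\<And>\<mu> x. \<mu> \<noteq> 0 \<Longrightarrow> (\<lambda>t. (Tr (2*m) (b0 * (\<mu> * t + x)) + h)^2) \<in> V"
    and Vadd: "\<And>f g. f \<in> V \<Longrightarrow> g \<in> V \<Longrightarrow> (\<lambda>t. f t + g t) \<in> V"
    and Vsm: "\<And>r f. r \<in> F3 \<Longrightarrow> f \<in> V \<Longrightarrow> (\<lambda>t. r * f t) \<in> V"
  shows "\<exists>x0\<noteq>0. \<forall>\<mu>. \<mu> \<noteq> 0 \<longrightarrow> (\<lambda>t. Tr (2*m) (x0 * (\<mu> * t))) \<in> V"
proof (intro exI[of _ b0] conjI allI impI)
  show "b0 \<noteq> 0" by fact
  fix \<mu> :: 'a assume mu: "\<mu> \<noteq> 0"
  obtain y :: 'a where y: "Tr (2*m) y \<noteq> 0" using Tr_nonzero by blast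
  define w where "w = Tr (2*m) y"
  have w: "w * w = 1" using y Tr_F3 F3_sq unfolding w_def by blast
  define xv where "xv v = (v - h) * w * y / b0" for v
  have trx: "Tr (2*m) (b0 * xv v) = v - h" if v: "v \<in> F3" for v
  proof -
    have vh: "(v - h) * w \<in> F3" unfolding w_def diff_conv_add_uminus
      by (intro F3_mult F3_add F3_neg v h Tr_F3)
    have "b0 * xv v = ((v - h) * w) * y" using b0 by (simp add: xv_def)
    hence "Tr (2*m) (b0 * xv v) = (v - h) * w * w" using Tr_smult[OF vh] by (simp add: w_def)
    thus ?thesis using w by (simp add: mult.assoc)
  qed
  have one: "(1::'a) \<in> F3" and two: "(2::'a) \<in> F3" by (auto simp: F3_def)
  have "(\<lambda>t. (\<lambda>t. (Tr (2*m) (b0 * (\<mu> * t + xv 1)) + h)^2) t + 2 * (\<lambda>t. (Tr (2*m) (b0 * (\<mu> * t + xv 2)) + h)^2) t) \<in> V"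
    by (intro Vadd Vsm two MV mu)
  moreover have "(\<lambda>t. (\<lambda>t. (Tr (2*m) (b0 * (\<mu> * t + xv 1)) + h)^2) t + 2 * (\<lambda>t. (Tr (2*m) (b0 * (\<mu> * t + xv 2)) + h)^2) t)
     = (\<lambda>t. Tr (2*m) (b0 * (\<mu> * t)))"
  proof
    fix t
    define u where "u = Tr (2*m) (b0 * (\<mu> * t))"
    have e: "Tr (2*m) (b0 * (\<mu> * t + xv v)) + h = u + v" if "v \<in> F3" for v
      using trx[OF that] by (simp add: distrib_left Tr_add u_def)
    have "(u + 1)^2 + 2 * (u + 2)^2 = u + 3 * (u*u + 3*u + 3)"
      by (simp add: power2_eq_square algebra_simps)
    thus "(Tr (2*m) (b0 * (\<mu> * t + xv 1)) + h)^2 + 2 * (Tr (2*m) (b0 * (\<mu> * t + xv 2)) + h)^2 = Tr (2*m) (b0 * (\<mu> * t))"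
      using e[OF one] e[OF two] by (simp add: char3 u_def)
  qed
  ultimately show "(\<lambda>t. Tr (2*m) (b0 * (\<mu> * t))) \<in> V" by simp
qed

lemma caseB:
  fixes a h' :: 'a
  assumes a0: "a \<noteq> 0" and aq: "a ^ (3^m) = a"
    and MV: "\<And>\<mu> x. \<mu> \<noteq> 0 \<Longrightarrow> (\<lambda>t. (Tr (2*m) (a * (\<mu> * t + x) ^ (3^m + 1)) + h')^2) \<in> V"
    and Vadd: "\<And>f g. f \<in> V \<Longrightarrow> g \<in> V \<Longrightarrow> (\<lambda>t. f t + g t) \<in> V"
    and Vsm: "\<And>r f. r \<in> F3 \<Longrightarrow> f \<in> V \<Longrightarrow> (\<lambda>t. r * f t) \<in> V"
  shows "\<exists>x0\<noteq>0. \<forall>\<mu>. \<mu> \<noteq> 0 \<longrightarrow> (\<lambda>t. Tr (2*m) (x0 * (\<mu> * t))) \<in> V"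
proof -
  define Q where "Q x = Tr (2*m) (a * x ^ (3^m + 1))" for x
  have gen: "Q (s + x) = Q s + 2 * Tr (2*m) (a * x ^ (3^m) * s) + Q x" for s x
    unfolding Q_def by (rule Ttrans[OF aq])
  have two: "(2::'a) \<in> F3" by (simp add: F3_def)
  obtain e1 where k0: "Q e1 \<noteq> 0"
  proof (rule ccontr)
    assume "\<not> thesis"
    hence Q0: "\<And>x. Q x = 0" using that by blast
    have "Tr (2*m) (a * t) = 0" for t
    proof -
      have h2: "2 * Tr (2*m) (a * t) = 0" using gen[of t 1] Q0 by simp
      have "Tr (2*m) (a * t) = 2 * (2 * Tr (2*m) (a * t)) - 3 * Tr (2*m) (a * t)" by (simp add: algebra_simps)
      thus ?thesis using h2 by (simp add: char3)
    qed
    hence "a = 0" by (rule Tr_lin_zero)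
    thus False using a0 by simp
  qed
  define k where "k = Q e1"
  have kF: "k \<in> F3" unfolding k_def Q_def by (rule Tr_F3)
  have kk: "k * k = 1" using F3_sq[OF kF] k0 k_def by simp
  obtain e2 where e2: "e2 \<notin> {0, e1, 2 * e1}"
  proof -
    have "card {0, e1, 2 * e1} \<le> 3" by (auto simp: card_insert_if)
    moreover have "(3::nat) < 3 ^ (2*m)"
      using power_strict_increasing[of 1 "2*m" "3::nat"] m2 by simp
    ultimately have "\<not> (UNIV \<subseteq> {0, e1, 2 * e1})"
      using cardU card_mono[of "{0, e1, 2 * e1}" UNIV] by fastforce
    thus ?thesis using that by blast
  qed
  define r where "r = Tr (2*m) (a * e1 ^ (3^m) * e2)"
  have rF: "r \<in> F3" unfolding r_def by (rule Tr_F3)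
  define x0 where "x0 = a * (r * e1 ^ (3^m) + 2 * k * e2 ^ (3^m))"
  have x0: "x0 \<noteq> 0"
  proof
    assume "x0 = 0"
    hence H: "r * e1 ^ (3^m) + 2 * k * e2 ^ (3^m) = 0" using a0 by (simp add: x0_def)
    have "k * e2 ^ (3^m) - r * e1 ^ (3^m) = 2 * (r * e1 ^ (3^m) + 2 * k * e2 ^ (3^m)) - 3 * (r * e1 ^ (3^m) + k * e2 ^ (3^m))"
      by (simp add: algebra_simps)
    hence "k * e2 ^ (3^m) = r * e1 ^ (3^m)" using H by (simp add: char3)
    hence "k * (k * e2 ^ (3^m)) = k * (r * e1 ^ (3^m))" by simp
    hence "e2 ^ (3^m) = (k * r) * e1 ^ (3^m)" using kk by (simp add: mult.assoc[symmetric])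
    also have "\<dots> = (k * r * e1) ^ (3^m)"
      using F3_pow[OF F3_mult[OF kF rF]] by (simp add: power_mult_distrib)
    finally have "e2 = k * r * e1" by (rule frob_inj)
    moreover have "k * r \<in> F3" using kF rF by (rule F3_mult)
    ultimately show False using e2 by (auto simp: F3_def)
  qed
  show ?thesis
  proof (intro exI[of _ x0] conjI allI impI x0)
    fix \<mu> :: 'a assume mu: "\<mu> \<noteq> 0"
    define g where "g x = (\<lambda>t. (Q (\<mu> * t + x) + h')^2)" for x
    have gV: "g x \<in> V" for x unfolding g_def Q_def by (rule MV[OF mu])
    have FV: "(\<lambda>t. 2 * g e2 t + g (-e2) t + 2 * g (e1+e2) t + g (-(e1+e2)) t + g (e1-e2) t + 2 * g (e2-e1) t) \<in> V"
      by (intro Vadd Vsm two gV)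
    moreover have "(\<lambda>t. 2 * g e2 t + g (-e2) t + 2 * g (e1+e2) t + g (-(e1+e2)) t + g (e1-e2) t + 2 * g (e2-e1) t)
       = (\<lambda>t. Tr (2*m) (x0 * (\<mu> * t)))"
    proof
      fix t
      define s where "s = \<mu> * t"
      define p1 where "p1 = Tr (2*m) (a * e1 ^ (3^m) * s)"
      define p2 where "p2 = Tr (2*m) (a * e2 ^ (3^m) * s)"
      define k2 where "k2 = Q e2"
      have Qn: "Q (-x) = Q x" for x unfolding Q_def by (rule Qneg)
      have Qp: "Q (e1 + e2) = k2 + 2 * r + k" 
        using gen[of e2 e1] by (simp add: k2_def k_def r_def add.commute mult.commute mult.left_commute)
      have Qm: "Q (e1 - e2) = k2 + 2 * (-r) + k"
      proof -
        have "Q (-e2 + e1) = Q (-e2) + 2 * Tr (2*m) (a * e1 ^ (3^m) * (-e2)) + Q e1" by (rule gen)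
        moreover have "Tr (2*m) (a * e1 ^ (3^m) * (-e2)) = - r" unfolding r_def by (simp add: Tr_neg[symmetric])
        ultimately show ?thesis by (simp add: Qn k2_def k_def)
      qed
      have Qm': "Q (e2 - e1) = k2 + 2 * (-r) + k"
        using Qm Qn[of "e1 - e2"] by simp
      have v1: "Q (s + e2) = Q s + 2 * p2 + k2" using gen[of s e2] by (simp add: p2_def k2_def)
      have v2: "Q (s + -e2) = Q s + 2 * (-p2) + k2"
        using gen[of s "-e2"] by (simp only: Pneg Qn p2_def k2_def)
      have v3: "Q (s + (e1+e2)) = Q s + 2 * (p1+p2) + (k2 + 2 * r + k)"
        using gen[of s "e1+e2"] by (simp only: Padd Qp p1_def p2_def)
      have v4: "Q (s + -(e1+e2)) = Q s + 2 * (-(p1+p2)) + (k2 + 2 * r + k)"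
        using gen[of s "-(e1+e2)"] by (simp only: Pneg Padd Qn Qp p1_def p2_def)
      have v5: "Q (s + (e1-e2)) = Q s + 2 * (p1-p2) + (k2 + 2 * (-r) + k)"
        using gen[of s "e1-e2"] by (simp only: Pdiff Qm p1_def p2_def)
      have v6: "Q (s + (e2-e1)) = Q s + 2 * (p2-p1) + (k2 + 2 * (-r) + k)"
        using gen[of s "e2-e1"] by (simp only: Pdiff Qm' p1_def p2_def)
      have tgt: "Tr (2*m) (x0 * s) = r * p1 + 2 * k * p2"
      proof -
        have "x0 * s = r * (a * e1 ^ (3^m) * s) + (2 * k) * (a * e2 ^ (3^m) * s)"
          by (simp add: x0_def algebra_simps)
        hence "Tr (2*m) (x0 * s) = Tr (2*m) (r * (a * e1 ^ (3^m) * s)) + Tr (2*m) ((2 * k) * (a * e2 ^ (3^m) * s))"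
          by (simp only: Tr_add)
        thus ?thesis by (simp only: Tr_smult[OF rF] Tr_smult[OF F3_mult[OF two kF]] p1_def p2_def)
      qed
      have L: "2 * g e2 t + g (-e2) t + 2 * g (e1+e2) t + g (-(e1+e2)) t + g (e1-e2) t + 2 * g (e2-e1) t
        = 2*(Q s + 2*p2 + k2 + h')^2 + (Q s + 2*(-p2) + k2 + h')^2
    + 2*(Q s + 2*(p1+p2) + (k2 + 2*r + k) + h')^2 + (Q s + 2*(-(p1+p2)) + (k2 + 2*r + k) + h')^2
    + (Q s + 2*(p1-p2) + (k2 + 2*(-r) + k) + h')^2 + 2*(Q s + 2*(p2-p1) + (k2 + 2*(-r) + k) + h')^2"
        unfolding g_def s_def[symmetric] v1 v2 v3 v4 v5 v6
        by (simp only: diff_conv_add_uminus)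
      show "2 * g e2 t + g (-e2) t + 2 * g (e1+e2) t + g (-(e1+e2)) t + g (e1-e2) t + 2 * g (e2-e1) t
         = Tr (2*m) (x0 * (\<mu> * t))"
        unfolding L ident6 s_def[symmetric] tgt by (simp add: char3)
    qed
    ultimately show "(\<lambda>t. Tr (2*m) (x0 * (\<mu> * t))) \<in> V" by simp
  qed
qed

lemma main:
  "(\<lambda>t::'a. Tr (2 * m) (b * t)) \<in>
           code_of_design (blocks_D (code_C m :: ('a \<Rightarrow> 'a) set) (min_weight (code_C m :: ('a \<Rightarrow> 'a) set)))"
proof -
  define C where "C = (code_C m :: ('a \<Rightarrow> 'a) set)"
  define d where "d = min_weight C"
  define V where "V = (code_of_design (blocks_D C d) :: ('a \<Rightarrow> 'a) set)"
  have Vadd': "\<And>f g. f \<in> V \<Longrightarrow> g \<in> V \<Longrightarrow> (\<lambda>t. f t + g t) \<in> V" unfolding V_def by (rule Vadd)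
  have Vsm': "\<And>r f. r \<in> F3 \<Longrightarrow> f \<in> V \<Longrightarrow> (\<lambda>t. r * f t) \<in> V" unfolding V_def by (rule Vsmult)
  have Msq: "(\<lambda>t. (c t)^2) \<in> V" if "c \<in> C" "hweight c = d" for c
  proof -
    have "supp c \<in> blocks_D C d" unfolding blocks_D_def using that by blast
    hence "incidence_vec (supp c) \<in> V" unfolding V_def by (rule Vblock)
    moreover have "incidence_vec (supp c) = (\<lambda>t. (c t)^2)"
      by (rule inc_sq) (use that code_val in \<open>auto simp: C_def\<close>)
    ultimately show ?thesis by simp
  qed
  have MV: "(\<lambda>t. (c (\<mu> * t + x))^2) \<in> V" if "c \<in> C" "hweight c = d" "\<mu> \<noteq> 0" for c \<mu> x
    by (rule Msq) (use that code_transf hweight_transf in \<open>auto simp: C_def\<close>)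
  define A where "A = {hweight c |c. c \<in> C \<and> c \<noteq> (\<lambda>_. 0)}"
  have finA: "finite A"
  proof (rule finite_subset)
    show "A \<subseteq> {..card (UNIV::'a set)}"
      unfolding A_def hweight_def by (auto intro!: card_mono)
  qed simp
  have one_C: "(\<lambda>t. 1) \<in> C"
  proof -
    have "(\<lambda>t::'a. Tr (2*m) (0 * t ^ (3 ^ m + 1) + 0 * t) + 1) = (\<lambda>t. 1)" by (simp add: Tr_zero)
    moreover have "(0::'a) \<in> subfield_m m" "(1::'a) \<in> F3" by (auto simp: subfield_m_def F3_def)
    ultimately show ?thesis unfolding C_def code_C_def
      by (intro CollectI exI[of _ "0::'a"] exI[of _ "0::'a"] exI[of _ "1::'a"] conjI) simp_all
  qed
  have c1C: "(\<lambda>t. Tr (2*m) t) \<in> C"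
  proof -
    have "(\<lambda>t::'a. Tr (2*m) (0 * t ^ (3 ^ m + 1) + 1 * t) + 0) = (\<lambda>t. Tr (2*m) t)" by simp
    moreover have "(0::'a) \<in> subfield_m m" "(0::'a) \<in> F3" by (auto simp: subfield_m_def F3_def)
    ultimately show ?thesis unfolding C_def code_C_def
      by (intro CollectI exI[of _ "0::'a"] exI[of _ "1::'a"] exI[of _ "0::'a"] conjI) simp_all
  qed
  have c1nz: "(\<lambda>t. Tr (2*m) t) \<noteq> (\<lambda>_::'a. 0::'a)" using Tr_nonzero by (metis)
  have c1w: "hweight (\<lambda>t::'a. Tr (2*m) t) < card (UNIV::'a set)"
  proof -
    have "0 \<notin> {t::'a. Tr (2*m) t \<noteq> 0}" by (simp add: Tr_zero)
    hence "{t::'a. Tr (2*m) t \<noteq> 0} \<subset> UNIV" by blast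
    thus ?thesis unfolding hweight_def by (rule psubset_card_mono[rotated]) simp
  qed
  have "A \<noteq> {}" unfolding A_def using c1C c1nz by blast
  hence "d \<in> A" unfolding d_def min_weight_def A_def[symmetric] using finA by (intro Min_in)
  then obtain c0 where c0C: "c0 \<in> C" and c0nz: "c0 \<noteq> (\<lambda>_. 0)" and c0w: "hweight c0 = d"
    unfolding A_def by blast
  have "d \<le> hweight (\<lambda>t::'a. Tr (2*m) t)"
    unfolding d_def min_weight_def A_def[symmetric] using finA c1C c1nz by (intro Min_le) (auto simp: A_def)
  hence hw: "hweight c0 < card (UNIV::'a set)" using c1w c0w by simp
  have "\<exists>z. c0 z = 0"
  proof (rule ccontr)
    assume "\<not> ?thesis" hence "{t. c0 t \<noteq> 0} = UNIV" by auto
    thus False using hw unfolding hweight_def by simp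
  qed
  then obtain z where z: "c0 z = 0" by blast
  have key: "\<exists>x0\<noteq>0. \<forall>\<mu>. \<mu> \<noteq> 0 \<longrightarrow> (\<lambda>t. Tr (2*m) (x0 * (\<mu> * t))) \<in> V"
  proof -
    obtain a b0 h where a: "a \<in> subfield_m m" and h: "h \<in> F3"
      and c0def: "c0 = (\<lambda>t. Tr (2*m) (a * t ^ (3 ^ m + 1) + b0 * t) + h)"
      using c0C unfolding C_def code_C_def by blast
    have aq: "a^(3^m) = a" using a by (simp add: subfield_m_def)
    show ?thesis
    proof (cases "a = 0")
      case True
      have c0e: "c0 = (\<lambda>t. Tr (2*m) (b0 * t) + h)" using True c0def by simp
      have b0: "b0 \<noteq> 0"
      proof
        assume "b0 = 0"
        hence "c0 = (\<lambda>t. h)" using c0e by (simp add: Tr_zero)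
        thus False using z c0nz by simp
      qed
      show ?thesis
      proof (rule caseA[OF b0 h _ Vadd' Vsm'])
        fix \<mu> x :: 'a assume mu: "\<mu> \<noteq> 0"
        show "(\<lambda>t. (Tr (2*m) (b0 * (\<mu> * t + x)) + h)^2) \<in> V" using MV[OF c0C c0w mu, of x] c0e by simp
      qed
    next
      case False
      obtain e where e: "e^(3^m) = b0 / a" using frob_surj by blast
      define h' where "h' = Tr (2*m) (a * e^(3^m+1)) + Tr (2*m) (b0 * e) + h"
      define c where "c = (\<lambda>t. c0 (1 * t + e))"
      have cC: "c \<in> C" and cw: "hweight c = d"
        using code_transf[of c0 1 e] hweight_transf[of 1 c0 e] c0C c0w unfolding c_def C_def by auto
      have ceq: "c y = Tr (2*m) (a * y^(3^m+1)) + h'" for y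
      proof -
        have "c y = Tr (2*m) (a * (y + e)^(3^m+1)) + Tr (2*m) (b0 * y) + Tr (2*m) (b0 * e) + h"
          by (simp add: c_def c0def Tr_add distrib_left)
        also have "\<dots> = Tr (2*m) (a * y^(3^m+1)) + 2 * Tr (2*m) (a * e^(3^m) * y) + Tr (2*m) (a * e^(3^m+1)) + Tr (2*m) (b0 * y) + Tr (2*m) (b0 * e) + h"
          by (simp only: Ttrans[OF aq])
        also have "a * e^(3^m) * y = b0 * y" using False e by simp
        also have "Tr (2*m) (a * y^(3^m+1)) + 2 * Tr (2*m) (b0 * y) + Tr (2*m) (a * e^(3^m+1)) + Tr (2*m) (b0 * y) + Tr (2*m) (b0 * e) + h
             = Tr (2*m) (a * y^(3^m+1)) + h' + 3 * Tr (2*m) (b0 * y)"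
          by (simp add: h'_def algebra_simps)
        finally show ?thesis by (simp add: char3)
      qed
      show ?thesis
      proof (rule caseB[OF False aq _ Vadd' Vsm'])
        fix \<mu> x :: 'a assume mu: "\<mu> \<noteq> 0"
        show "(\<lambda>t. (Tr (2*m) (a * (\<mu> * t + x) ^ (3^m + 1)) + h')^2) \<in> V"
          using MV[OF cC cw mu, of x] by (simp add: ceq)
      qed
    qed
  qed
  have "(\<lambda>t. Tr (2*m) (b * t)) \<in> V"
  proof (cases "b = 0")
    case True
    thus ?thesis using V0[of "blocks_D C d"] by (simp add: Tr_zero V_def)
  next
    case False
    obtain x0 where x0: "x0 \<noteq> 0" and H: "\<And>\<mu>. \<mu> \<noteq> 0 \<Longrightarrow> (\<lambda>t. Tr (2*m) (x0 * (\<mu> * t))) \<in> V"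
      using key by blast
    have "(\<lambda>t. Tr (2*m) (x0 * ((b / x0) * t))) \<in> V" by (rule H) (use False x0 in simp)
    moreover have "(\<lambda>t. Tr (2*m) (x0 * ((b / x0) * t))) = (\<lambda>t. Tr (2*m) (b * t))" using x0 by simp
    ultimately show ?thesis by simp
  qed
  thus ?thesis by (simp add: V_def C_def d_def)
qed

end

theorem lemma3p6:
  fixes m :: nat and b :: "'a::{field,finite}"
  assumes "m \<ge> 2" and "card (UNIV :: 'a set) = 3 ^ (2 * m)"
  shows "(\<lambda>t::'a. Tr (2 * m) (b * t)) \<in>
           code_of_design (blocks_D (code_C m :: ('a \<Rightarrow> 'a) set) (min_weight (code_C m :: ('a \<Rightarrow> 'a) set)))"
  by (rule main[OF assms])

end
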